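(* Let $f^{\pm},g^{\pm}:\mathbb{R}^2\to\mathbb{R}$ and $H:\mathbb{R}^2\times\mathbb{R}\to\mathbb{R}$ be $C^2$, and consider for $\varepsilon>0$ the Filippov system $(\dot x,\dot y)=(f^{+},g^{+})(x,y)$ if $H(x,y,\varepsilon)>0$ and $(\dot x,\dot y)=(f^{-},g^{-})(x,y)$ if $H(x,y,\varepsilon)<0$. Assume $f^-(0)=g^-(0)=0$, $H(0)=0$, $H_x(0)=0$, $H_y(0)\ne0$, $$H_y(0)g^+(0)<0,\qquad g^-_x(0)\neq0,\qquad (f^-_x(0),g^-_x(0))\ \text{not parallel to}\ (f^+(0),g^+(0)).$$ Then there exist $r>0$, $\varepsilon_0>0$ such that for each $0<\varepsilon\le\varepsilon_0$ there is a unique point $(A(\varepsilon),B(\varepsilon))\in[-r,r]^2$ with $$H(A,B,\varepsilon)=0,\qquad H_x(A,B,\varepsilon)f^-(A,B)+H_y(A,B,\varepsilon)g^-(A,B)=0,$$ and $\varepsilon\mapsto(A(\varepsilon),B(\varepsilon))$ is $C^1$ with $(A(0),B(0))=(0,0)$. Moreover: 1) $(A'(0),B'(0))=\dfrac{H_\varepsilon(0)}{H_y(0)}\Big(\dfrac{g^-_y(0)}{g^-_x(0)},-1\Big)$. 2) $L\setminus\{(A(\varepsilon),B(\varepsilon))\}=L_{sliding}\cup L_{crossing}$, where $L=\{(x,y)\in[-r,r]^2:H(x,y,\varepsilon)=0\}$, $L_{sliding}=\{(x,y)\in L: H_xf^-+H_yg^->0\}$, $L_{crossing}=\{(x,y)\in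 L: H_xf^-+H_yg^-<0\}$ (with $H_x,H_y$ evaluated at $(x,y,\varepsilon)$ and $f^-,g^-$ at $(x,y)$). 3) The system $f^-(a,b)-\lambda f^+(a,b)=0$, $g^-(a,b)-\lambda g^+(a,b)=0$, $H(a,b,\varepsilon)=0$ has, near $(0,0,0)$, a unique $C^1$ solution $(a(\varepsilon),b(\varepsilon),\lambda(\varepsilon))$ with $(a,b,\lambda)(0)=0$, and $$(a'(0),b'(0),\lambda'(0))=\frac{H_\varepsilon(0)}{H_y(0)}\left(\frac{f^-_y(0)g^+(0)-g^-_y(0)f^+(0)}{f^-_x(0)g^+(0)-g^-_x(0)f^+(0)},\,-1,\,-\frac{f^-_x(0)g^-_y(0)-f^-_y(0)g^-_x(0)}{f^-_x(0)g^+(0)-g^-_x(0)f^+(0)}\right).$$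
   Context: Subscripts denote partial derivatives; "$(0)$" means evaluation at the origin (and $\varepsilon=0$ for $H$). The solutions $(a(\varepsilon),b(\varepsilon))$ of the system in 3) are the equilibria (pseudo-equilibria) of the Filippov sliding vector field on the switching curve $\{H=0\}$. *)

theory Defs
  imports "HOL-Analysis.Analysis"
begin

definition C1 :: "('a::real_normed_vector \<Rightarrow> 'b::real_normed_vector) \<Rightarrow> bool" where
  "C1 f \<longleftrightarrow> (\<exists>f'. (\<forall>x. (f has_derivative blinfun_apply (f' x)) (at x)) \<and> continuous_on UNIV f')"

definition C2 :: "('a::real_normed_vector \<Rightarrow> 'b::real_normed_vector) \<Rightarrow> bool" where
  "C2 f \<longleftrightarrow> (\<exists>f'. (\<forall>x. (f has_derivative blinfun_apply (f' x)) (at x)) \<and> C1 f')"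

definition C1_on_real :: "real set \<Rightarrow> (real \<Rightarrow> real) \<Rightarrow> bool" where
  "C1_on_real S a \<longleftrightarrow> (\<exists>a'. (\<forall>e\<in>S. (a has_real_derivative a' e) (at e within S)) \<and> continuous_on S a')"

definition px :: "(real \<times> real \<Rightarrow> real) \<Rightarrow> real \<Rightarrow> real \<Rightarrow> real" where
  "px f x y = deriv (\<lambda>t. f (t, y)) x"
definition py :: "(real \<times> real \<Rightarrow> real) \<Rightarrow> real \<Rightarrow> real \<Rightarrow> real" where
  "py f x y = deriv (\<lambda>t. f (x, t)) y"

definition Hx :: "(real \<times> real \<times> real \<Rightarrow> real) \<Rightarrow> real \<Rightarrow> real \<Rightarrow> real \<Rightarrow> real" where
  "Hx H x y e = deriv (\<lambda>t. H (t, y, e)) x"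
definition Hy :: "(real \<times> real \<times> real \<Rightarrow> real) \<Rightarrow> real \<Rightarrow> real \<Rightarrow> real \<Rightarrow> real" where
  "Hy H x y e = deriv (\<lambda>t. H (x, t, e)) y"
definition He :: "(real \<times> real \<times> real \<Rightarrow> real) \<Rightarrow> real \<Rightarrow> real \<Rightarrow> real \<Rightarrow> real" where
  "He H x y e = deriv (\<lambda>t. H (x, y, t)) e"

end

theory Submission
  imports Defs
begin


lemma norm_fst_le': "norm (fst x) \<le> norm x"
  by (cases x) (simp add: norm_Pair real_le_rsqrt)
lemma norm_snd_le': "norm (snd x) \<le> norm x"
  by (cases x) (simp add: norm_Pair real_le_rsqrt)

lemma ift:
  fixes F :: "'a::euclidean_space \<times> real \<Rightarrow> 'a" and D :: "'a \<times> real \<Rightarrow> 'a \<times> real \<Rightarrow> 'a"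
  assumes der: "\<And>p. (F has_derivative D p) (at p)"
    and cont: "\<And>w. continuous_on UNIV (\<lambda>p. D p w)"
    and F0: "F (0,0) = 0"
    and inj: "\<And>v. D (0,0) (v,0) = 0 \<Longrightarrow> v = 0"
  obtains \<rho> \<epsilon> \<phi> \<phi>' where "\<rho>>0" "\<epsilon>>0" "\<phi> 0 = 0"
    "\<And>e. \<bar>e\<bar><\<epsilon> \<Longrightarrow> norm (\<phi> e) < \<rho>/4 \<and> F (\<phi> e, e) = 0"
    "\<And>e x. \<bar>e\<bar><\<epsilon> \<Longrightarrow> norm x < \<rho> \<Longrightarrow> F (x,e) = 0 \<Longrightarrow> x = \<phi> e"
    "\<And>e. \<bar>e\<bar><\<epsilon> \<Longrightarrow> (\<phi> has_vector_derivative \<phi>' e) (at e)"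
    "\<And>e. \<bar>e\<bar><\<epsilon> \<Longrightarrow> D (\<phi> e, e) (\<phi>' e, 1) = 0"
    "continuous_on {-\<epsilon><..<\<epsilon>} \<phi>'"
proof -
  have lin: "bounded_linear (D p)" for p using der has_derivative_bounded_linear by blast
  define G where "G p = (F p, snd p)" for p :: "'a \<times> real"
  define DG where "DG p w = (D p w, snd w)" for p w :: "'a \<times> real"
  have linG: "bounded_linear (DG p)" for p
    unfolding DG_def by (intro bounded_linear_Pair lin bounded_linear_snd)
  have derG: "(G has_derivative DG p) (at p)" for p
    unfolding G_def DG_def
    by (intro has_derivative_Pair der has_derivative_snd has_derivative_ident)
  define G' where "G' p = Blinfun (DG p)" for p
  have G'a: "blinfun_apply (G' p) = DG p" for p
    unfolding G'_def using linG bounded_linear_Blinfun_apply by blast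
  have contG': "continuous_on UNIV G'"
    by (rule continuous_on_blinfun_componentwise)
       (auto simp: G'a DG_def intro!: continuous_intros cont)
  have injG0: "inj (DG (0,0))"
  proof -
    have "x = 0" if "DG (0,0) x = 0" for x
    proof -
      obtain u t where x: "x = (u,t)" by fastforce
      have "t = 0" using that by (simp add: DG_def x zero_prod_def)
      then have "D (0,0) (u,0) = 0" using that by (simp add: DG_def x zero_prod_def)
      then have "u = 0" using inj by blast
      then show ?thesis using \<open>t = 0\<close> x by (simp add: zero_prod_def)
    qed
    then show ?thesis using linG bounded_linear.linear linear_inj_iff_eq_0 by blast
  qed
  obtain gi where gi: "linear gi" "gi \<circ> DG (0,0) = id"
    using linear_injective_left_inverse[OF bounded_linear.linear[OF linG] injG0] by blast
  have blgi: "bounded_linear gi" using gi(1) linear_conv_bounded_linear by blast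
  define invf where "invf = Blinfun gi"
  have invf: "invf o\<^sub>L G' (0,0) = id_blinfun"
    by (rule blinfun_eqI) (simp add: invf_def bounded_linear_Blinfun_apply[OF blgi] G'a
        pointfree_idE[OF gi(2)])
  have G0: "G (0,0) = (0,0)" by (simp add: G_def F0)
  obtain U' V g g' where U': "open U'" "(0,0) \<in> U'" and V: "open V" "(0,0) \<in> V"
     and hom: "homeomorphism U' V G g"
     and derg: "\<And>y. y \<in> V \<Longrightarrow> (g has_derivative (g' y)) (at y)"
     and g': "\<And>y. y \<in> V \<Longrightarrow> g' y = inv (blinfun_apply (G'(g y)))"
     and bij: "\<And>y. y \<in> V \<Longrightarrow> bij (blinfun_apply (G'(g y)))"
    using inverse_function_theorem[of UNIV G G' "(0,0)" invf] derG G'a contG' invf G0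
    by (metis open_UNIV UNIV_I)

  have gG: "\<And>x. x \<in> U' \<Longrightarrow> g (G x) = x" and Gg: "\<And>y. y \<in> V \<Longrightarrow> G (g y) = y"
    and gV: "\<And>y. y \<in> V \<Longrightarrow> g y \<in> U'" and contg: "continuous_on V g"
    using hom unfolding homeomorphism_def by auto
  have g0: "g (0,0) = (0,0)" using gG[OF U'(2)] G0 by simp
  obtain r where r: "r > 0" "ball (0,0) r \<subseteq> U'" using U' open_contains_ball by blast
  obtain s where s: "s > 0" "ball (0,0) s \<subseteq> V" using V open_contains_ball by blast
  define \<rho> where "\<rho> = r/2"
  have \<rho>: "\<rho> > 0" using r by (simp add: \<rho>_def)
  have "continuous (at (0,0)) g"
    using contg V continuous_on_eq_continuous_at by blast
  then obtain s2 where s2: "s2 > 0" "\<And>y. dist y (0,0) < s2 \<Longrightarrow> dist (g y) (g (0,0)) < \<rho>/4"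
    unfolding continuous_at_eps_delta using \<rho> by (metis divide_pos_pos zero_less_numeral)
  define \<epsilon> where "\<epsilon> = min (min s s2) \<rho>"
  have \<epsilon>: "\<epsilon> > 0" using s s2 \<rho> by (simp add: \<epsilon>_def)
  define \<phi> where "\<phi> e = fst (g (0,e))" for e
  have inV: "(0,e) \<in> V" if "\<bar>e\<bar> < \<epsilon>" for e
    using that s unfolding \<epsilon>_def by (auto simp: dist_norm norm_Pair)
  have gpair: "g (0,e) = (\<phi> e, e) \<and> F (\<phi> e, e) = 0" if "\<bar>e\<bar> < \<epsilon>" for e
  proof -
    have "G (g (0,e)) = (0,e)" using Gg inV that by blast
    then show ?thesis unfolding G_def \<phi>_def by (metis prod.collapse prod.inject)
  qed
  have small: "norm (\<phi> e) < \<rho>/4" if "\<bar>e\<bar> < \<epsilon>" for e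
  proof -
    have "dist (g (0,e)) (g (0,0)) < \<rho>/4"
      using s2(2)[of "(0,e)"] that by (auto simp: \<epsilon>_def dist_norm norm_Pair)
    then have "norm (g (0,e)) < \<rho>/4" using g0 by (simp add: dist_norm flip: zero_prod_def)
    moreover have "norm (\<phi> e) \<le> norm (g (0,e))" unfolding \<phi>_def
      by (rule norm_fst_le')
    ultimately show ?thesis by linarith
  qed
  have uniq: "x = \<phi> e" if "\<bar>e\<bar><\<epsilon>" "norm x < \<rho>" "F (x,e) = 0" for e x
  proof -
    have "norm (x,e) \<le> norm x + \<bar>e\<bar>"
      by (metis norm_Pair_le real_norm_def)
    also have "\<dots> < r" using that unfolding \<epsilon>_def \<rho>_def by linarith
    finally have "(x,e) \<in> ball 0 r" by simp
    then have "(x,e) \<in> U'" using r(2) by (auto simp: zero_prod_def)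
    then have "g (G (x,e)) = (x,e)" using gG by blast
    then have "g (0,e) = (x,e)" using that(3) by (simp add: G_def)
    then show ?thesis using gpair[OF that(1)] by simp
  qed
  define \<phi>' where "\<phi>' e = fst (g' (0,e) (0,1))" for e
  have key: "g' (0,e) (0,1) = (\<phi>' e, 1) \<and> D (\<phi> e, e) (\<phi>' e, 1) = 0" if "\<bar>e\<bar><\<epsilon>" for e
  proof -
    have b: "bij (DG (g (0,e)))" using bij[OF inV[OF that]] by (simp add: G'a)
    have "DG (g (0,e)) (g' (0,e) (0,1)) = (0,1)"
      using g'[OF inV[OF that]] b by (simp add: G'a bij_is_surj surj_f_inv_f)
    then show ?thesis using gpair[OF that] unfolding DG_def \<phi>'_def
      by (metis prod.collapse prod.inject)
  qed
  have derphi: "(\<phi> has_vector_derivative \<phi>' e) (at e)" if "\<bar>e\<bar><\<epsilon>" for e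
  proof -
    have dP: "((\<lambda>e. (0::'a, e)) has_derivative (\<lambda>t. (0,t))) (at e)"
      by (rule has_derivative_Pair[OF has_derivative_const has_derivative_ident])
    have d1: "((\<lambda>e. g (0,e)) has_derivative (\<lambda>t. g' (0,e) (0,t))) (at e)"
      using has_derivative_compose[of "\<lambda>e. (0::'a,e)" "\<lambda>t. (0,t)" e UNIV g "g' (0,e)"]
        derg[OF inV[OF that]] dP by simp
    have bl: "bounded_linear (g' (0,e))" using derg[OF inV[OF that]] has_derivative_bounded_linear by blast
    have "g' (0,e) (0,t) = t *\<^sub>R (\<phi>' e, 1)" for t
    proof -
      have "g' (0,e) (0,t) = g' (0,e) (t *\<^sub>R (0,1))" by simp
      also have "\<dots> = t *\<^sub>R g' (0,e) (0,1)" using bl linear_scale[of "g' (0,e)"] bounded_linear.linear by blast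
      finally show ?thesis using key[OF that] by simp
    qed
    then have "((\<lambda>e. g (0,e)) has_derivative (\<lambda>t. t *\<^sub>R (\<phi>' e, 1))) (at e)" using d1 by simp
    then have "(\<phi> has_derivative (\<lambda>t. fst (t *\<^sub>R (\<phi>' e, 1::real)))) (at e)"
      unfolding \<phi>_def by (rule has_derivative_fst)
    then show ?thesis by (simp add: has_vector_derivative_def)
  qed

  have contphi': "continuous_on {-\<epsilon><..<\<epsilon>} \<phi>'"
  proof (subst continuous_on_eq_continuous_at, simp, intro ballI)
    fix e0 assume "e0 \<in> {-\<epsilon><..<\<epsilon>}"
    then have e0: "\<bar>e0\<bar> < \<epsilon>" by auto
    define B where "B e = G' (\<phi> e, e)" for e
    have "isCont \<phi> e0" using derphi[OF e0] has_vector_derivative_continuous by blast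
    then have "isCont (\<lambda>e. (\<phi> e, e)) e0" by (intro continuous_intros)
    moreover have "isCont G' (\<phi> e0, e0)" using contG' continuous_on_eq_continuous_at by blast
    ultimately have "isCont B e0" unfolding B_def using continuous_at_compose[of e0 "\<lambda>e. (\<phi> e, e)" G']
      by (simp add: o_def)
    then have tB: "((\<lambda>e. norm (B e - B e0)) \<longlongrightarrow> 0) (at e0)"
      by (simp add: isCont_def tendsto_norm_zero_iff Lim_null[symmetric])
    have "bij (DG (\<phi> e0, e0))" using bij[OF inV[OF e0]] gpair[OF e0] by (simp add: G'a)
    then obtain c where c: "c > 0" "\<And>z. c * norm z \<le> norm (DG (\<phi> e0, e0) z)"
      using linear_inj_bounded_below_pos[of "DG (\<phi> e0, e0)"] linG bounded_linear.linear bij_is_inj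
      by metis
    define w where "w e = (\<phi>' e, 1::real)" for e
    have DGw: "DG (\<phi> e, e) (w e) = (0,1)" if "\<bar>e\<bar> < \<epsilon>" for e
      using key[OF that] by (simp add: DG_def w_def)
    have ev1: "\<forall>\<^sub>F e in at e0. \<bar>e\<bar> < \<epsilon>"
    proof -
      have "\<forall>\<^sub>F e in nhds e0. e \<in> {-\<epsilon><..<\<epsilon>}" using e0
        by (intro eventually_nhds_in_open) auto
      then have "\<forall>\<^sub>F e in nhds e0. \<bar>e\<bar> < \<epsilon>" by (rule eventually_mono) auto
      then show ?thesis by (rule filter_leD[OF at_within_le_nhds])
    qed
    have ev2: "\<forall>\<^sub>F e in at e0. norm (B e - B e0) < c/2"
      using order_tendstoD(2)[OF tB, of "c/2"] c(1) by simp
    have "\<forall>\<^sub>F e in at e0. norm (\<phi>' e - \<phi>' e0) \<le> (2/c) * norm (B e - B e0) * norm (w e0)"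
      using ev1 ev2
    proof eventually_elim
      case (elim e)
      define z where "z = w e - w e0"
      have Be: "blinfun_apply (B e) = DG (\<phi> e, e)" "blinfun_apply (B e0) = DG (\<phi> e0, e0)"
        by (simp_all add: B_def G'a)
      have "DG (\<phi> e, e) z = DG (\<phi> e, e) (w e) - DG (\<phi> e, e) (w e0)"
        unfolding z_def using linG[THEN bounded_linear.linear] linear_diff by blast
      also have "\<dots> = DG (\<phi> e0, e0) (w e0) - DG (\<phi> e, e) (w e0)"
        using DGw[OF elim(1)] DGw[OF e0] by simp
      also have "\<dots> = blinfun_apply (B e0 - B e) (w e0)" by (simp add: Be blinfun.diff_left)
      finally have z1: "DG (\<phi> e, e) z = blinfun_apply (B e0 - B e) (w e0)" .
      have "norm (DG (\<phi> e0, e0) z) \<le> norm (DG (\<phi> e, e) z) + norm (blinfun_apply (B e0 - B e) z)"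
        by (metis Be blinfun.diff_left norm_triangle_sub)
      also have "norm (blinfun_apply (B e0 - B e) z) \<le> norm (B e0 - B e) * norm z"
        by (rule norm_blinfun)
      finally have "c * norm z \<le> norm (DG (\<phi> e, e) z) + norm (B e - B e0) * norm z"
        using c(2)[of z] by (simp add: norm_minus_commute)
      moreover have "norm (B e - B e0) * norm z \<le> c/2 * norm z"
        using elim(2) by (intro mult_right_mono) auto
      ultimately have "c/2 * norm z \<le> norm (DG (\<phi> e, e) z)" by linarith
      also have "\<dots> \<le> norm (B e - B e0) * norm (w e0)"
        using z1 norm_blinfun[of "B e0 - B e" "w e0"] by (simp add: norm_minus_commute)
      finally have zz: "norm z \<le> (2/c) * norm (B e - B e0) * norm (w e0)"
        using c(1) by (simp add: field_simps)
      have "norm (\<phi>' e - \<phi>' e0) \<le> norm z" using norm_fst_le'[of z] by (simp add: z_def w_def)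
      then show ?case using zz by linarith
    qed
    moreover have "((\<lambda>e. (2/c) * norm (B e - B e0) * norm (w e0)) \<longlongrightarrow> 0) (at e0)"
      using tendsto_mult[OF tendsto_mult[OF tendsto_const tB] tendsto_const, of "2/c" "norm (w e0)"] by simp
    ultimately have "((\<lambda>e. \<phi>' e - \<phi>' e0) \<longlongrightarrow> 0) (at e0)" by (rule Lim_null_comparison)
    then show "isCont \<phi>' e0" by (simp add: isCont_def Lim_null[symmetric])
  qed
  have phi0: "\<phi> 0 = 0" by (simp add: \<phi>_def g0)
  show thesis
    apply (rule that[of \<rho> \<epsilon> \<phi> \<phi>'])
    using \<rho> \<epsilon> gpair small uniq derphi key contphi' phi0
    by auto
qed


lemma C1_cont: "C1 f \<Longrightarrow> continuous_on UNIV f"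
  unfolding C1_def
  by (meson continuous_at_imp_continuous_on has_derivative_continuous)

lemma C2_D: "C2 f \<Longrightarrow> \<exists>D. (\<forall>x. (f has_derivative blinfun_apply (D x)) (at x)) \<and> continuous_on UNIV D"
  unfolding C2_def using C1_cont by blast

lemma C2_DD: "C2 f \<Longrightarrow> \<exists>D D2. (\<forall>x. (f has_derivative blinfun_apply (D x)) (at x)) \<and>
    (\<forall>x. (D has_derivative blinfun_apply (D2 x)) (at x)) \<and> continuous_on UNIV D2 \<and> continuous_on UNIV D"
  unfolding C2_def C1_def
  by (meson continuous_at_imp_continuous_on has_derivative_continuous)

lemma der_cont: "(\<And>x. (f has_derivative f' x) (at x)) \<Longrightarrow> continuous_on UNIV f"
  by (meson continuous_at_imp_continuous_on has_derivative_continuous)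

lemma partial_deriv:
  fixes f :: "'a::real_normed_vector \<Rightarrow> real"
  assumes "\<And>q. (f has_derivative blinfun_apply (L q)) (at q)" "\<And>s. c s = a + s *\<^sub>R v"
  shows "deriv (\<lambda>s. f (c s)) t = L (c t) v"
proof -
  have c: "c = (\<lambda>s. a + s *\<^sub>R v)" using assms(2) by auto
  have "((\<lambda>s. a + s *\<^sub>R v) has_derivative (\<lambda>s. s *\<^sub>R v)) (at t)"
    by (auto intro!: derivative_eq_intros)
  from has_derivative_compose[OF this assms(1)]
  have "((\<lambda>s. f (c s)) has_derivative (\<lambda>s. L (c t) (s *\<^sub>R v))) (at t)" unfolding c .
  then have "((\<lambda>s. f (c s)) has_derivative (\<lambda>s. L (c t) v * s)) (at t)"
    by (simp add: blinfun.scaleR_right mult.commute)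
  then have "((\<lambda>s. f (c s)) has_field_derivative L (c t) v) (at t)"
    by (simp add: has_field_derivative_def)
  then show ?thesis by (rule DERIV_imp_deriv)
qed

lemma lin3: "blinfun_apply (L::(real\<times>real\<times>real) \<Rightarrow>\<^sub>L real) (a,b,c) =
   a * L (1,0,0) + b * L (0,1,0) + c * L (0,0,1)"
proof -
  have "L (a,b,c) = L (a *\<^sub>R (1,0,0) + b *\<^sub>R (0,1,0) + c *\<^sub>R ((0::real),(0::real),(1::real)))" by simp
  also have "\<dots> = a *\<^sub>R L (1,0,0) + b *\<^sub>R L (0,1,0) + c *\<^sub>R L (0,0,1)"
    by (simp only: blinfun.add_right blinfun.scaleR_right)
  finally show ?thesis by simp
qed

lemma lin2: "blinfun_apply (L::(real\<times>real) \<Rightarrow>\<^sub>L real) (a,b) = a * L (1,0) + b * L (0,1)"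
proof -
  have "L (a,b) = L (a *\<^sub>R (1,0) + b *\<^sub>R ((0::real),(1::real)))" by simp
  also have "\<dots> = a *\<^sub>R L (1,0) + b *\<^sub>R L (0,1)"
    by (simp only: blinfun.add_right blinfun.scaleR_right)
  finally show ?thesis by simp
qed

lemma cont_app: "continuous_on UNIV D \<Longrightarrow> continuous_on S g \<Longrightarrow> continuous_on S h \<Longrightarrow>
   continuous_on S (\<lambda>x. blinfun_apply (D (g x)) (h x))"
  by (intro blinfun.continuous_on continuous_on_compose2[of UNIV D S g]) auto

lemma cont_app2: "continuous_on UNIV D \<Longrightarrow> continuous_on S g \<Longrightarrow> continuous_on S h \<Longrightarrow> continuous_on S k \<Longrightarrow>
   continuous_on S (\<lambda>x. blinfun_apply (blinfun_apply (D (g x)) (h x)) (k x))"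
  by (intro blinfun.continuous_on continuous_on_compose2[of UNIV D S g]) auto

lemma cont_fun: "continuous_on UNIV f \<Longrightarrow> continuous_on S g \<Longrightarrow> continuous_on S (\<lambda>x. f (g x))"
  using continuous_on_compose2[of UNIV f S g] by auto

lemma der_app: "(A has_derivative A') F \<Longrightarrow>
   ((\<lambda>q. blinfun_apply (A q) c) has_derivative (\<lambda>h. blinfun_apply (A' h) c)) F"
  by (rule bounded_linear.has_derivative[OF blinfun.bounded_linear_left])

lemma vd_fst: "(\<phi> has_vector_derivative v) F \<Longrightarrow> ((\<lambda>e. fst (\<phi> e)) has_vector_derivative fst v) F"
  unfolding has_vector_derivative_def by (drule has_derivative_fst) simp
lemma vd_snd: "(\<phi> has_vector_derivative v) F \<Longrightarrow> ((\<lambda>e. snd (\<phi> e)) has_vector_derivative snd v) F"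
  unfolding has_vector_derivative_def by (drule has_derivative_snd) simp




theorem proposition1:
  fixes fp gp fm gm :: "real \<times> real \<Rightarrow> real" and H :: "real \<times> real \<times> real \<Rightarrow> real"
  assumes "C2 fp" "C2 gp" "C2 fm" "C2 gm" "C2 H"
    and "fm (0, 0) = 0" "gm (0, 0) = 0" "H (0, 0, 0) = 0"
    and "Hx H 0 0 0 = 0" "Hy H 0 0 0 \<noteq> 0"
    and "Hy H 0 0 0 * gp (0, 0) < 0"
    and "px gm 0 0 \<noteq> 0"
    and "px fm 0 0 * gp (0, 0) - px gm 0 0 * fp (0, 0) \<noteq> 0"
  shows "\<exists>r>0. \<exists>\<epsilon>0>0. \<exists>A B.
     C1_on_real {0..\<epsilon>0} A \<and> C1_on_real {0..\<epsilon>0} B \<and> A 0 = 0 \<and> B 0 = 0 \<and>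
     (\<forall>e\<in>{0<..\<epsilon>0}. A e \<in> {-r..r} \<and> B e \<in> {-r..r} \<and>
        (\<forall>x\<in>{-r..r}. \<forall>y\<in>{-r..r}.
           (H (x, y, e) = 0 \<and> Hx H x y e * fm (x, y) + Hy H x y e * gm (x, y) = 0)
           \<longleftrightarrow> (x = A e \<and> y = B e))) \<and>
     (A has_real_derivative (He H 0 0 0 / Hy H 0 0 0) * (py gm 0 0 / px gm 0 0)) (at 0 within {0..\<epsilon>0}) \<and>
     (B has_real_derivative (He H 0 0 0 / Hy H 0 0 0) * (-1)) (at 0 within {0..\<epsilon>0}) \<and>
     (\<forall>e\<in>{0<..\<epsilon>0}.
        {p \<in> {-r..r} \<times> {-r..r}. H (fst p, snd p, e) = 0} - {(A e, B e)} =
        {p \<in> {-r..r} \<times> {-r..r}. H (fst p, snd p, e) = 0 \<and>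
            Hx H (fst p) (snd p) e * fm p + Hy H (fst p) (snd p) e * gm p > 0}
        \<union> {p \<in> {-r..r} \<times> {-r..r}. H (fst p, snd p, e) = 0 \<and>
            Hx H (fst p) (snd p) e * fm p + Hy H (fst p) (snd p) e * gm p < 0}) \<and>
     (\<exists>\<delta>>0. \<exists>\<epsilon>1>0. \<exists>a b l.
        C1_on_real {-\<epsilon>1<..<\<epsilon>1} a \<and> C1_on_real {-\<epsilon>1<..<\<epsilon>1} b \<and> C1_on_real {-\<epsilon>1<..<\<epsilon>1} l \<and>
        a 0 = 0 \<and> b 0 = 0 \<and> l 0 = 0 \<and>
        (\<forall>e\<in>{-\<epsilon>1<..<\<epsilon>1}. \<forall>x y \<mu>. \<bar>x\<bar> < \<delta> \<and> \<bar>y\<bar> < \<delta> \<and> \<bar>\<mu>\<bar> < \<delta> \<longrightarrow>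
           ((fm (x, y) - \<mu> * fp (x, y) = 0 \<and> gm (x, y) - \<mu> * gp (x, y) = 0 \<and> H (x, y, e) = 0)
            \<longleftrightarrow> (x = a e \<and> y = b e \<and> \<mu> = l e))) \<and>
        (a has_real_derivative (He H 0 0 0 / Hy H 0 0 0) *
           ((py fm 0 0 * gp (0, 0) - py gm 0 0 * fp (0, 0)) /
            (px fm 0 0 * gp (0, 0) - px gm 0 0 * fp (0, 0)))) (at 0) \<and>
        (b has_real_derivative (He H 0 0 0 / Hy H 0 0 0) * (-1)) (at 0) \<and>
        (l has_real_derivative (He H 0 0 0 / Hy H 0 0 0) *
           (- ((px fm 0 0 * py gm 0 0 - py fm 0 0 * px gm 0 0) /
               (px fm 0 0 * gp (0, 0) - px gm 0 0 * fp (0, 0))))) (at 0))"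
proof -
  note a = assms
  obtain DH D2H where dH: "\<And>q. (H has_derivative blinfun_apply (DH q)) (at q)"
    and dDH: "\<And>q. (DH has_derivative blinfun_apply (D2H q)) (at q)"
    and cD2H: "continuous_on UNIV D2H" and cDH: "continuous_on UNIV DH"
    using C2_DD[OF a(5)] by blast
  obtain Dfm where dfm: "\<And>q. (fm has_derivative blinfun_apply (Dfm q)) (at q)"
    and cDfm: "continuous_on UNIV Dfm" using C2_D[OF a(3)] by blast
  obtain Dgm where dgm: "\<And>q. (gm has_derivative blinfun_apply (Dgm q)) (at q)"
    and cDgm: "continuous_on UNIV Dgm" using C2_D[OF a(4)] by blast
  obtain Dfp where dfp: "\<And>q. (fp has_derivative blinfun_apply (Dfp q)) (at q)"
    and cDfp: "continuous_on UNIV Dfp" using C2_D[OF a(1)] by blast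
  obtain Dgp where dgp: "\<And>q. (gp has_derivative blinfun_apply (Dgp q)) (at q)"
    and cDgp: "continuous_on UNIV Dgp" using C2_D[OF a(2)] by blast
  have cH: "continuous_on UNIV H" using der_cont[OF dH] .
  have cfm: "continuous_on UNIV fm" using der_cont[OF dfm] .
  have cgm: "continuous_on UNIV gm" using der_cont[OF dgm] .
  have cfp: "continuous_on UNIV fp" using der_cont[OF dfp] .
  have cgp: "continuous_on UNIV gp" using der_cont[OF dgp] .
  have HxE: "Hx H x y e = DH (x,y,e) (1,0,0)" for x y e
    unfolding Hx_def using partial_deriv[of H DH "\<lambda>s. (s,y,e)" "(0,y,e)" "(1,0,0)" x] dH by simp
  have HyE: "Hy H x y e = DH (x,y,e) (0,1,0)" for x y e
    unfolding Hy_def using partial_deriv[of H DH "\<lambda>s. (x,s,e)" "(x,0,e)" "(0,1,0)" y] dH by simp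
  have HeE: "He H x y e = DH (x,y,e) (0,0,1)" for x y e
    unfolding He_def using partial_deriv[of H DH "\<lambda>s. (x,y,s)" "(x,y,0)" "(0,0,1)" e] dH by simp
  have pxE: "\<And>f Df. (\<And>q. (f has_derivative blinfun_apply (Df q)) (at q)) \<Longrightarrow> px f x y = Df (x,y) (1,0)" for x y
    unfolding px_def subgoal for f Df using partial_deriv[of f Df "\<lambda>s. (s,y)" "(0,y)" "(1,0)" x] by simp done
  have pyE: "\<And>f Df. (\<And>q. (f has_derivative blinfun_apply (Df q)) (at q)) \<Longrightarrow> py f x y = Df (x,y) (0,1)" for x y
    unfolding py_def subgoal for f Df using partial_deriv[of f Df "\<lambda>s. (x,s)" "(x,0)" "(0,1)" y] by simp done
  define Hx0 where "Hx0 = DH (0,0,0) (1,0,0)"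
  define Hy0 where "Hy0 = DH (0,0,0) (0,1,0)"
  define He0 where "He0 = DH (0,0,0) (0,0,1)"
  define fmx where "fmx = Dfm (0,0) (1,0)"
  define fmy where "fmy = Dfm (0,0) (0,1)"
  define gmx where "gmx = Dgm (0,0) (1,0)"
  define gmy where "gmy = Dgm (0,0) (0,1)"
  have Hx0: "Hx0 = 0" using a(9) HxE Hx0_def by simp
  have Hy0: "Hy0 \<noteq> 0" using a(10) HyE Hy0_def by simp
  have gmx: "gmx \<noteq> 0" using a(12) pxE[OF dgm] gmx_def by simp
  have Dd: "fmx * gp (0,0) - gmx * fp (0,0) \<noteq> 0" using a(13) pxE[OF dgm] pxE[OF dfm] fmx_def gmx_def by simp
  define T where "T p = (fst (fst p), snd (fst p), snd p)" for p :: "(real \<times> real) \<times> real"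
  define F1 where "F1 p = (H (T p), DH (T p) (1,0,0) * fm (fst p) + DH (T p) (0,1,0) * gm (fst p))" for p
  define DF1 where "DF1 p w = (DH (T p) (T w),
     DH (T p) (1,0,0) * Dfm (fst p) (fst w) + D2H (T p) (T w) (1,0,0) * fm (fst p) +
     (DH (T p) (0,1,0) * Dgm (fst p) (fst w) + D2H (T p) (T w) (0,1,0) * gm (fst p)))" for p w
  have dT: "(T has_derivative T) (at p)" for p
    unfolding T_def by (auto intro!: derivative_eq_intros)
  have dF1: "(F1 has_derivative DF1 p) (at p)" for p
  proof -
    have dHT: "((\<lambda>p. H (T p)) has_derivative (\<lambda>w. DH (T p) (T w))) (at p)"
      by (rule has_derivative_compose[OF dT dH])
    have dhc: "((\<lambda>p. DH (T p) c) has_derivative (\<lambda>w. D2H (T p) (T w) c)) (at p)" for c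
      by (rule der_app[OF has_derivative_compose[OF dT dDH]])
    have df: "((\<lambda>p. f (fst p)) has_derivative (\<lambda>w. Df (fst p) (fst w))) (at p)"
      if "\<And>q. (f has_derivative blinfun_apply (Df q)) (at q)" for f Df
      by (rule has_derivative_compose[OF has_derivative_fst[OF has_derivative_ident] that])
    show ?thesis unfolding F1_def DF1_def
      by (intro has_derivative_Pair dHT has_derivative_add has_derivative_mult dhc df dfm dgm)
  qed
  have cT: "continuous_on UNIV T" unfolding T_def by (intro continuous_intros)
  have cfst: "continuous_on UNIV (\<lambda>p::(real\<times>real)\<times>real. fst p)" by (intro continuous_intros)
  have cH1: "continuous_on UNIV (\<lambda>p. blinfun_apply (DH (T p)) c)" for c
    by (rule cont_app[OF cDH cT continuous_on_const])
  have cH2: "continuous_on UNIV (\<lambda>p. blinfun_apply (blinfun_apply (D2H (T p)) c) d)" for c d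
    by (rule cont_app2[OF cD2H cT continuous_on_const continuous_on_const])
  have cfm1: "continuous_on UNIV (\<lambda>p::(real\<times>real)\<times>real. blinfun_apply (Dfm (fst p)) c)" for c
    by (rule cont_app[OF cDfm cfst continuous_on_const])
  have cgm1: "continuous_on UNIV (\<lambda>p::(real\<times>real)\<times>real. blinfun_apply (Dgm (fst p)) c)" for c
    by (rule cont_app[OF cDgm cfst continuous_on_const])
  have cfm0: "continuous_on UNIV (\<lambda>p::(real\<times>real)\<times>real. fm (fst p))" by (rule cont_fun[OF cfm cfst])
  have cgm0: "continuous_on UNIV (\<lambda>p::(real\<times>real)\<times>real. gm (fst p))" by (rule cont_fun[OF cgm cfst])
  have cDF1: "continuous_on UNIV (\<lambda>p. DF1 p w)" for w
    unfolding DF1_def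
    by (intro continuous_on_Pair continuous_on_add continuous_on_mult cH1 cH2 cfm1 cgm1 cfm0 cgm0)
  have F10: "F1 (0,0) = 0" using a(6-8) by (simp add: F1_def T_def zero_prod_def)
  have inj1: "v = 0" if "DF1 (0,0) (v,0) = 0" for v
  proof -
    obtain u w where v: "v = (u,w)" by fastforce
    have e1: "DH (0,0,0) (u,w,0) = u * Hx0 + w * Hy0"
      by (subst lin3) (simp add: Hx0_def Hy0_def)
    have e2: "Dgm (0,0) (u,w) = u * gmx + w * gmy"
      by (subst lin2) (simp add: gmx_def gmy_def)
    have "DH (0,0,0) (u,w,0) = 0" "Hy0 * Dgm (0,0) (u,w) = 0"
      using that a(6,7) Hx0 unfolding v DF1_def T_def by (simp_all add: zero_prod_def Hx0_def Hy0_def)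
    then have "Hy0 * w = 0" "Hy0 * (gmx * u + gmy * w) = 0"
      using e1 e2 Hx0 by (simp_all add: algebra_simps)
    then show ?thesis using Hy0 gmx v by (simp add: zero_prod_def)
  qed
  obtain \<rho> \<epsilon> \<phi> \<phi>' where ph: "\<rho>>0" "\<epsilon>>0" "\<phi> 0 = 0"
    "\<And>e. \<bar>e\<bar><\<epsilon> \<Longrightarrow> norm (\<phi> e) < \<rho>/4 \<and> F1 (\<phi> e, e) = 0"
    "\<And>e x. \<bar>e\<bar><\<epsilon> \<Longrightarrow> norm x < \<rho> \<Longrightarrow> F1 (x,e) = 0 \<Longrightarrow> x = \<phi> e"
    "\<And>e. \<bar>e\<bar><\<epsilon> \<Longrightarrow> (\<phi> has_vector_derivative \<phi>' e) (at e)"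
    "\<And>e. \<bar>e\<bar><\<epsilon> \<Longrightarrow> DF1 (\<phi> e, e) (\<phi>' e, 1) = 0"
    "continuous_on {-\<epsilon><..<\<epsilon>} \<phi>'"
    apply (rule ift[of F1 DF1])
    apply (rule dF1) apply (rule cDF1) apply (rule F10) apply (erule inj1) by blast
  define r where "r = \<rho>/3"
  define \<epsilon>0 where "\<epsilon>0 = \<epsilon>/2"
  define A where "A e = fst (\<phi> e)" for e
  define B where "B e = snd (\<phi> e)" for e
  have rpos: "r > 0" using ph(1) by (simp add: r_def)
  have e0pos: "\<epsilon>0 > 0" using ph(2) by (simp add: \<epsilon>0_def)
  have inE: "\<bar>e\<bar> < \<epsilon>" if "e \<in> {0..\<epsilon>0}" for e using that ph(2) by (auto simp: \<epsilon>0_def)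
  have rdA: "(A has_real_derivative fst (\<phi>' e)) (at e)" if "\<bar>e\<bar> < \<epsilon>" for e
    unfolding A_def has_real_derivative_iff_has_vector_derivative using vd_fst[OF ph(6)[OF that]] .
  have rdB: "(B has_real_derivative snd (\<phi>' e)) (at e)" if "\<bar>e\<bar> < \<epsilon>" for e
    unfolding B_def has_real_derivative_iff_has_vector_derivative using vd_snd[OF ph(6)[OF that]] .
  have csub: "continuous_on {0..\<epsilon>0} \<phi>'"
    by (rule continuous_on_subset[OF ph(8)]) (use ph(2) in \<open>auto simp: \<epsilon>0_def\<close>)
  have C1A: "C1_on_real {0..\<epsilon>0} A"
    unfolding C1_on_real_def
    by (rule exI[of _ "\<lambda>e. fst (\<phi>' e)"])
       (use rdA inE csub in \<open>auto intro: has_field_derivative_at_within continuous_on_fst\<close>)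
  have C1B: "C1_on_real {0..\<epsilon>0} B"
    unfolding C1_on_real_def
    by (rule exI[of _ "\<lambda>e. snd (\<phi>' e)"])
       (use rdB inE csub in \<open>auto intro: has_field_derivative_at_within continuous_on_snd\<close>)
  have A0: "A 0 = 0" and B0: "B 0 = 0" using ph(3) by (simp_all add: A_def B_def zero_prod_def)
  have F1E: "F1 ((x,y),e) = 0 \<longleftrightarrow> (H (x, y, e) = 0 \<and> Hx H x y e * fm (x, y) + Hy H x y e * gm (x, y) = 0)" for x y e
    by (simp add: F1_def T_def HxE HyE zero_prod_def)
  have Abox: "A e \<in> {-r..r} \<and> B e \<in> {-r..r}" if "\<bar>e\<bar> < \<epsilon>" for e
  proof -
    have "norm (\<phi> e) < \<rho>/4" using ph(4)[OF that] by simp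
    moreover have "\<bar>A e\<bar> \<le> norm (\<phi> e)" "\<bar>B e\<bar> \<le> norm (\<phi> e)"
      using norm_fst_le'[of "\<phi> e"] norm_snd_le'[of "\<phi> e"] by (simp_all add: A_def B_def)
    ultimately show ?thesis using ph(1) by (auto simp: r_def)
  qed
  have uniq1: "(H (x, y, e) = 0 \<and> Hx H x y e * fm (x, y) + Hy H x y e * gm (x, y) = 0) \<longleftrightarrow> (x = A e \<and> y = B e)"
    if "\<bar>e\<bar> < \<epsilon>" "x \<in> {-r..r}" "y \<in> {-r..r}" for x y e
  proof
    assume h: "H (x, y, e) = 0 \<and> Hx H x y e * fm (x, y) + Hy H x y e * gm (x, y) = 0"
    have "norm (x,y) \<le> norm x + norm y" by (rule norm_Pair_le)
    also have "\<dots> < \<rho>" using that(2,3) ph(1) by (auto simp: r_def)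
    finally have "(x,y) = \<phi> e" using ph(5)[OF that(1)] h F1E by blast
    then show "x = A e \<and> y = B e" by (simp add: A_def B_def prod_eq_iff)
  next
    assume "x = A e \<and> y = B e"
    then have "(x,y) = \<phi> e" by (simp add: A_def B_def)
    then show "H (x, y, e) = 0 \<and> Hx H x y e * fm (x, y) + Hy H x y e * gm (x, y) = 0"
      using ph(4)[OF that(1)] F1E by metis
  qed
  have P1: "\<forall>e\<in>{0<..\<epsilon>0}. A e \<in> {-r..r} \<and> B e \<in> {-r..r} \<and>
        (\<forall>x\<in>{-r..r}. \<forall>y\<in>{-r..r}.
           (H (x, y, e) = 0 \<and> Hx H x y e * fm (x, y) + Hy H x y e * gm (x, y) = 0)
           \<longleftrightarrow> (x = A e \<and> y = B e))"
    using Abox uniq1 inE by auto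
  have P2: "\<forall>e\<in>{0<..\<epsilon>0}.
        {p \<in> {-r..r} \<times> {-r..r}. H (fst p, snd p, e) = 0} - {(A e, B e)} =
        {p \<in> {-r..r} \<times> {-r..r}. H (fst p, snd p, e) = 0 \<and>
            Hx H (fst p) (snd p) e * fm p + Hy H (fst p) (snd p) e * gm p > 0}
        \<union> {p \<in> {-r..r} \<times> {-r..r}. H (fst p, snd p, e) = 0 \<and>
            Hx H (fst p) (snd p) e * fm p + Hy H (fst p) (snd p) e * gm p < 0}"
  proof
    fix e assume "e \<in> {0<..\<epsilon>0}"
    then have e: "\<bar>e\<bar> < \<epsilon>" using inE by auto
    show "{p \<in> {-r..r} \<times> {-r..r}. H (fst p, snd p, e) = 0} - {(A e, B e)} =
        {p \<in> {-r..r} \<times> {-r..r}. H (fst p, snd p, e) = 0 \<and>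
            Hx H (fst p) (snd p) e * fm p + Hy H (fst p) (snd p) e * gm p > 0}
        \<union> {p \<in> {-r..r} \<times> {-r..r}. H (fst p, snd p, e) = 0 \<and>
            Hx H (fst p) (snd p) e * fm p + Hy H (fst p) (snd p) e * gm p < 0}"
    proof (rule set_eqI)
      fix p :: "real \<times> real"
      obtain x y where p: "p = (x,y)" by fastforce
      show "p \<in> {p \<in> {-r..r} \<times> {-r..r}. H (fst p, snd p, e) = 0} - {(A e, B e)} \<longleftrightarrow>
        p \<in> {p \<in> {-r..r} \<times> {-r..r}. H (fst p, snd p, e) = 0 \<and>
            Hx H (fst p) (snd p) e * fm p + Hy H (fst p) (snd p) e * gm p > 0}
        \<union> {p \<in> {-r..r} \<times> {-r..r}. H (fst p, snd p, e) = 0 \<and>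
            Hx H (fst p) (snd p) e * fm p + Hy H (fst p) (snd p) e * gm p < 0}"
        using uniq1[OF e, of x y] unfolding p by (auto simp del: atLeastAtMost_iff)
    qed
  qed
  obtain a1 b1 where ab1: "\<phi>' 0 = (a1, b1)" by fastforce
  have eq0: "DF1 ((0,0),0) ((a1,b1),1) = 0" using ph(7)[of 0] ph(2) ph(3) ab1 by (simp add: zero_prod_def)
  have e1: "DH (0,0,0) (a1,b1,1) = a1 * Hx0 + b1 * Hy0 + He0"
    by (subst lin3) (simp add: Hx0_def Hy0_def He0_def)
  have e2: "Dgm (0,0) (a1,b1) = a1 * gmx + b1 * gmy"
    by (subst lin2) (simp add: gmx_def gmy_def)
  have "DH (0,0,0) (a1,b1,1) = 0" "Hy0 * Dgm (0,0) (a1,b1) = 0"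
    using eq0 a(6,7) Hx0 unfolding DF1_def T_def by (simp_all add: zero_prod_def Hx0_def Hy0_def)
  then have h1: "b1 * Hy0 + He0 = 0" and h2: "Hy0 * (a1 * gmx + b1 * gmy) = 0" using e1 e2 Hx0 by simp_all
  have b1: "b1 = - He0 / Hy0" using h1 Hy0 by (auto simp: field_simps)
  have ag: "a1 * gmx + b1 * gmy = 0" using h2 Hy0 by (simp only: mult_eq_0_iff) simp
  have a1: "a1 = He0 / Hy0 * (gmy / gmx)"
  proof -
    have "a1 = - b1 * gmy / gmx" using ag gmx by (auto simp: field_simps)
    then show ?thesis using b1 by simp
  qed
  have dA: "(A has_real_derivative (He H 0 0 0 / Hy H 0 0 0) * (py gm 0 0 / px gm 0 0)) (at 0 within {0..\<epsilon>0})"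
    using rdA[of 0] ph(2) ab1 a1 by (auto intro: has_field_derivative_at_within
        simp: HeE HyE pxE[OF dgm] pyE[OF dgm] He0_def Hy0_def gmx_def gmy_def)
  have dB: "(B has_real_derivative (He H 0 0 0 / Hy H 0 0 0) * (-1)) (at 0 within {0..\<epsilon>0})"
    using rdB[of 0] ph(2) ab1 b1 by (auto intro: has_field_derivative_at_within
        simp: HeE HyE He0_def Hy0_def)
  define xy where "xy p = (fst (fst p), fst (snd (fst p)))" for p :: "(real \<times> real \<times> real) \<times> real"
  define mu where "mu p = snd (snd (fst p))" for p :: "(real \<times> real \<times> real) \<times> real"
  define T3 where "T3 p = (fst (fst p), fst (snd (fst p)), snd p)" for p :: "(real \<times> real \<times> real) \<times> real"
  define F3 where "F3 p = (fm (xy p) - mu p * fp (xy p), gm (xy p) - mu p * gp (xy p), H (T3 p))" for p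
  define DF3 where "DF3 p w = (Dfm (xy p) (xy w) - (mu p * Dfp (xy p) (xy w) + mu w * fp (xy p)),
      Dgm (xy p) (xy w) - (mu p * Dgp (xy p) (xy w) + mu w * gp (xy p)), DH (T3 p) (T3 w))" for p w
  have dxy: "(xy has_derivative xy) (at p)" for p unfolding xy_def by (auto intro!: derivative_eq_intros)
  have dmu: "(mu has_derivative mu) (at p)" for p unfolding mu_def by (auto intro!: derivative_eq_intros)
  have dT3: "(T3 has_derivative T3) (at p)" for p unfolding T3_def by (auto intro!: derivative_eq_intros)
  have dF3: "(F3 has_derivative DF3 p) (at p)" for p
  proof -
    have df: "((\<lambda>p. f (xy p)) has_derivative (\<lambda>w. Df (xy p) (xy w))) (at p)"
      if "\<And>q. (f has_derivative blinfun_apply (Df q)) (at q)" for f Df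
      by (rule has_derivative_compose[OF dxy that])
    have dHT: "((\<lambda>p. H (T3 p)) has_derivative (\<lambda>w. DH (T3 p) (T3 w))) (at p)"
      by (rule has_derivative_compose[OF dT3 dH])
    show ?thesis unfolding F3_def DF3_def
      by (intro has_derivative_Pair has_derivative_diff has_derivative_mult dmu df dfm dgm dfp dgp dHT)
  qed
  have cT3: "continuous_on UNIV T3" unfolding T3_def by (intro continuous_intros)
  have cxy: "continuous_on UNIV xy" unfolding xy_def by (intro continuous_intros)
  have cmu: "continuous_on UNIV mu" unfolding mu_def by (intro continuous_intros)
  have c3H: "continuous_on UNIV (\<lambda>p. blinfun_apply (DH (T3 p)) c)" for c
    by (rule cont_app[OF cDH cT3 continuous_on_const])
  have c3d: "continuous_on UNIV (\<lambda>p. blinfun_apply (Df (xy p)) c)" if "continuous_on UNIV Df" for Df c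
    by (rule cont_app[OF that cxy continuous_on_const])
  have c3f: "continuous_on UNIV (\<lambda>p. f (xy p))" if "continuous_on UNIV f" for f
    by (rule cont_fun[OF that cxy])
  have cDF3: "continuous_on UNIV (\<lambda>p. DF3 p w)" for w
    unfolding DF3_def
    by (intro continuous_on_Pair continuous_on_diff continuous_on_add continuous_on_mult continuous_on_const
        c3H c3d c3f cmu cDfm cDgm cDfp cDgp cfp cgp)
  have F30: "F3 (0,0) = 0" using a(6-8) by (simp add: F3_def T3_def xy_def mu_def zero_prod_def)
  have inj3: "v = 0" if "DF3 (0,0) (v,0) = 0" for v
  proof -
    obtain u w m where v: "v = (u,w,m)" by (metis prod.collapse)
    have e1: "DH (0,0,0) (u,w,0) = u * Hx0 + w * Hy0"
      by (subst lin3) (simp add: Hx0_def Hy0_def)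
    have e2: "Dgm (0,0) (u,w) = u * gmx + w * gmy"
      by (subst lin2) (simp add: gmx_def gmy_def)
    have e3: "Dfm (0,0) (u,w) = u * fmx + w * fmy"
      by (subst lin2) (simp add: fmx_def fmy_def)
    have "Dfm (0,0) (u,w) - m * fp (0,0) = 0" "Dgm (0,0) (u,w) - m * gp (0,0) = 0" "DH (0,0,0) (u,w,0) = 0"
      using that unfolding v DF3_def T3_def xy_def mu_def by (simp_all add: zero_prod_def)
    then have q1: "u * fmx + w * fmy - m * fp (0,0) = 0" and q2: "u * gmx + w * gmy - m * gp (0,0) = 0"
      and q3: "w * Hy0 = 0" using e1 e2 e3 Hx0 by simp_all
    have w0: "w = 0" using q3 Hy0 by simp
    have "u * (fmx * gp (0,0) - gmx * fp (0,0)) = gp (0,0) * (u * fmx + w * fmy - m * fp (0,0)) - fp (0,0) * (u * gmx + w * gmy - m * gp (0,0))"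
      using w0 by (simp add: algebra_simps)
    then have u0: "u = 0" using q1 q2 Dd by simp
    have "m * (fmx * gp (0,0) - gmx * fp (0,0)) = gmx * (u * fmx + w * fmy - m * fp (0,0)) - fmx * (u * gmx + w * gmy - m * gp (0,0))"
      using w0 by (simp add: algebra_simps)
    then have m0: "m = 0" using q1 q2 Dd by simp
    show ?thesis using v w0 u0 m0 by (simp add: zero_prod_def)
  qed
  obtain \<rho>3 \<epsilon>3 \<psi> \<psi>' where ps: "\<rho>3>0" "\<epsilon>3>0" "\<psi> 0 = 0"
    "\<And>e. \<bar>e\<bar><\<epsilon>3 \<Longrightarrow> norm (\<psi> e) < \<rho>3/4 \<and> F3 (\<psi> e, e) = 0"
    "\<And>e x. \<bar>e\<bar><\<epsilon>3 \<Longrightarrow> norm x < \<rho>3 \<Longrightarrow> F3 (x,e) = 0 \<Longrightarrow> x = \<psi> e"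
    "\<And>e. \<bar>e\<bar><\<epsilon>3 \<Longrightarrow> (\<psi> has_vector_derivative \<psi>' e) (at e)"
    "\<And>e. \<bar>e\<bar><\<epsilon>3 \<Longrightarrow> DF3 (\<psi> e, e) (\<psi>' e, 1) = 0"
    "continuous_on {-\<epsilon>3<..<\<epsilon>3} \<psi>'"
    apply (rule ift[of F3 DF3])
    apply (rule dF3) apply (rule cDF3) apply (rule F30) apply (erule inj3) by blast
  define \<delta> where "\<delta> = \<rho>3/3"
  define la where "la e = fst (\<psi> e)" for e
  define lb where "lb e = fst (snd (\<psi> e))" for e
  define ll where "ll e = snd (snd (\<psi> e))" for e
  have dpos: "\<delta> > 0" using ps(1) by (simp add: \<delta>_def)
  have rda: "(la has_real_derivative fst (\<psi>' e)) (at e)" if "\<bar>e\<bar> < \<epsilon>3" for e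
    unfolding la_def has_real_derivative_iff_has_vector_derivative using vd_fst[OF ps(6)[OF that]] .
  have rdb: "(lb has_real_derivative fst (snd (\<psi>' e))) (at e)" if "\<bar>e\<bar> < \<epsilon>3" for e
    unfolding lb_def has_real_derivative_iff_has_vector_derivative using vd_fst[OF vd_snd[OF ps(6)[OF that]]] .
  have rdl: "(ll has_real_derivative snd (snd (\<psi>' e))) (at e)" if "\<bar>e\<bar> < \<epsilon>3" for e
    unfolding ll_def has_real_derivative_iff_has_vector_derivative using vd_snd[OF vd_snd[OF ps(6)[OF that]]] .
  have inI: "\<bar>e\<bar> < \<epsilon>3" if "e \<in> {-\<epsilon>3<..<\<epsilon>3}" for e using that by auto
  have C1a: "C1_on_real {-\<epsilon>3<..<\<epsilon>3} la"
    unfolding C1_on_real_def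
    by (rule exI[of _ "\<lambda>e. fst (\<psi>' e)"])
       (use rda inI ps(8) in \<open>auto intro: has_field_derivative_at_within continuous_on_fst\<close>)
  have C1b: "C1_on_real {-\<epsilon>3<..<\<epsilon>3} lb"
    unfolding C1_on_real_def
    by (rule exI[of _ "\<lambda>e. fst (snd (\<psi>' e))"])
       (use rdb inI ps(8) in \<open>auto intro: has_field_derivative_at_within continuous_on_fst continuous_on_snd\<close>)
  have C1l: "C1_on_real {-\<epsilon>3<..<\<epsilon>3} ll"
    unfolding C1_on_real_def
    by (rule exI[of _ "\<lambda>e. snd (snd (\<psi>' e))"])
       (use rdl inI ps(8) in \<open>auto intro: has_field_derivative_at_within continuous_on_snd\<close>)
  have la0: "la 0 = 0" and lb0: "lb 0 = 0" and ll0: "ll 0 = 0"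
    using ps(3) by (simp_all add: la_def lb_def ll_def zero_prod_def)
  have F3E: "F3 ((x,y,\<mu>),e) = 0 \<longleftrightarrow> (fm (x, y) - \<mu> * fp (x, y) = 0 \<and> gm (x, y) - \<mu> * gp (x, y) = 0 \<and> H (x, y, e) = 0)"
    for x y \<mu> e by (simp add: F3_def T3_def xy_def mu_def zero_prod_def)
  have uniq3: "\<forall>e\<in>{-\<epsilon>3<..<\<epsilon>3}. \<forall>x y \<mu>. \<bar>x\<bar> < \<delta> \<and> \<bar>y\<bar> < \<delta> \<and> \<bar>\<mu>\<bar> < \<delta> \<longrightarrow>
           ((fm (x, y) - \<mu> * fp (x, y) = 0 \<and> gm (x, y) - \<mu> * gp (x, y) = 0 \<and> H (x, y, e) = 0)
            \<longleftrightarrow> (x = la e \<and> y = lb e \<and> \<mu> = ll e))"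
  proof (intro ballI allI impI)
    fix e x y \<mu> assume e: "e \<in> {-\<epsilon>3<..<\<epsilon>3}" and b: "\<bar>x\<bar> < \<delta> \<and> \<bar>y\<bar> < \<delta> \<and> \<bar>\<mu>\<bar> < \<delta>"
    have e': "\<bar>e\<bar> < \<epsilon>3" using e by auto
    have psi: "\<psi> e = (la e, lb e, ll e)" by (simp add: la_def lb_def ll_def)
    show "(fm (x, y) - \<mu> * fp (x, y) = 0 \<and> gm (x, y) - \<mu> * gp (x, y) = 0 \<and> H (x, y, e) = 0)
            \<longleftrightarrow> (x = la e \<and> y = lb e \<and> \<mu> = ll e)"
    proof
      assume h: "fm (x, y) - \<mu> * fp (x, y) = 0 \<and> gm (x, y) - \<mu> * gp (x, y) = 0 \<and> H (x, y, e) = 0"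
      have "norm (x,y,\<mu>) \<le> norm x + norm (y,\<mu>)" by (rule norm_Pair_le)
      also have "norm (y,\<mu>) \<le> norm y + norm \<mu>" by (rule norm_Pair_le)
      finally have "norm (x,y,\<mu>) < \<rho>3" using b by (simp add: \<delta>_def)
      then have "(x,y,\<mu>) = \<psi> e" using ps(5)[OF e'] h F3E by blast
      then show "x = la e \<and> y = lb e \<and> \<mu> = ll e" using psi by simp
    next
      assume "x = la e \<and> y = lb e \<and> \<mu> = ll e"
      then have "(x,y,\<mu>) = \<psi> e" using psi by simp
      then show "fm (x, y) - \<mu> * fp (x, y) = 0 \<and> gm (x, y) - \<mu> * gp (x, y) = 0 \<and> H (x, y, e) = 0"
        using ps(4)[OF e'] F3E by metis
    qed
  qed
  obtain a3 b3 l3 where abl: "\<psi>' 0 = (a3, b3, l3)" by (metis prod.collapse)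
  have eq3: "DF3 ((0,0,0),0) ((a3,b3,l3),1) = 0" using ps(7)[of 0] ps(2) ps(3) abl by (simp add: zero_prod_def)
  have f1: "DH (0,0,0) (a3,b3,1) = a3 * Hx0 + b3 * Hy0 + He0"
    by (subst lin3) (simp add: Hx0_def Hy0_def He0_def)
  have f2: "Dgm (0,0) (a3,b3) = a3 * gmx + b3 * gmy"
    by (subst lin2) (simp add: gmx_def gmy_def)
  have f3: "Dfm (0,0) (a3,b3) = a3 * fmx + b3 * fmy"
    by (subst lin2) (simp add: fmx_def fmy_def)
  have "Dfm (0,0) (a3,b3) - l3 * fp (0,0) = 0" "Dgm (0,0) (a3,b3) - l3 * gp (0,0) = 0" "DH (0,0,0) (a3,b3,1) = 0"
    using eq3 unfolding DF3_def T3_def xy_def mu_def by (simp_all add: zero_prod_def)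
  then have q1: "a3 * fmx + b3 * fmy - l3 * fp (0,0) = 0" and q2: "a3 * gmx + b3 * gmy - l3 * gp (0,0) = 0"
    and q3: "b3 * Hy0 + He0 = 0" using f1 f2 f3 Hx0 by simp_all
  define Dd3 where "Dd3 = fmx * gp (0,0) - gmx * fp (0,0)"
  have Dd3: "Dd3 \<noteq> 0" using Dd by (simp add: Dd3_def)
  have b3: "b3 = - He0 / Hy0" using q3 Hy0 by (auto simp: field_simps)
  have "a3 * Dd3 = gp (0,0) * (a3 * fmx + b3 * fmy - l3 * fp (0,0)) - fp (0,0) * (a3 * gmx + b3 * gmy - l3 * gp (0,0))
       - b3 * (fmy * gp (0,0) - gmy * fp (0,0))"
    by (simp add: Dd3_def algebra_simps)
  then have "a3 * Dd3 = - b3 * (fmy * gp (0,0) - gmy * fp (0,0))" using q1 q2 by simp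
  then have a3: "a3 = He0 / Hy0 * ((fmy * gp (0,0) - gmy * fp (0,0)) / Dd3)"
    using Dd3 b3 Hy0 by (auto simp: field_simps)
  have "l3 * Dd3 = - (fmx * (a3 * gmx + b3 * gmy - l3 * gp (0,0)) - gmx * (a3 * fmx + b3 * fmy - l3 * fp (0,0)))
       + b3 * (fmx * gmy - fmy * gmx)"
    by (simp add: Dd3_def algebra_simps)
  then have "l3 * Dd3 = b3 * (fmx * gmy - fmy * gmx)" using q1 q2 by simp
  then have l3: "l3 = He0 / Hy0 * (- ((fmx * gmy - fmy * gmx) / Dd3))"
    using Dd3 b3 Hy0 by (auto simp: field_simps)
  have conv: "He H 0 0 0 = He0" "Hy H 0 0 0 = Hy0" "px fm 0 0 = fmx" "py fm 0 0 = fmy"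
     "px gm 0 0 = gmx" "py gm 0 0 = gmy"
    by (simp_all add: HeE HyE pxE[OF dfm] pyE[OF dfm] pxE[OF dgm] pyE[OF dgm] He0_def Hy0_def
        fmx_def fmy_def gmx_def gmy_def)
  have da: "(la has_real_derivative (He H 0 0 0 / Hy H 0 0 0) *
           ((py fm 0 0 * gp (0, 0) - py gm 0 0 * fp (0, 0)) /
            (px fm 0 0 * gp (0, 0) - px gm 0 0 * fp (0, 0)))) (at 0)"
    using rda[of 0] ps(2) abl a3 by (simp add: conv Dd3_def)
  have db: "(lb has_real_derivative (He H 0 0 0 / Hy H 0 0 0) * (-1)) (at 0)"
    using rdb[of 0] ps(2) abl b3 by (simp add: conv)
  have dl: "(ll has_real_derivative (He H 0 0 0 / Hy H 0 0 0) *
           (- ((px fm 0 0 * py gm 0 0 - py fm 0 0 * px gm 0 0) /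
               (px fm 0 0 * gp (0, 0) - px gm 0 0 * fp (0, 0))))) (at 0)"
    using rdl[of 0] ps(2) abl l3 by (simp add: conv Dd3_def)
  have P3: "\<exists>\<delta>>0. \<exists>\<epsilon>1>0. \<exists>a b l.
        C1_on_real {-\<epsilon>1<..<\<epsilon>1} a \<and> C1_on_real {-\<epsilon>1<..<\<epsilon>1} b \<and> C1_on_real {-\<epsilon>1<..<\<epsilon>1} l \<and>
        a 0 = 0 \<and> b 0 = 0 \<and> l 0 = 0 \<and>
        (\<forall>e\<in>{-\<epsilon>1<..<\<epsilon>1}. \<forall>x y \<mu>. \<bar>x\<bar> < \<delta> \<and> \<bar>y\<bar> < \<delta> \<and> \<bar>\<mu>\<bar> < \<delta> \<longrightarrow>
           ((fm (x, y) - \<mu> * fp (x, y) = 0 \<and> gm (x, y) - \<mu> * gp (x, y) = 0 \<and> H (x, y, e) = 0)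
            \<longleftrightarrow> (x = a e \<and> y = b e \<and> \<mu> = l e))) \<and>
        (a has_real_derivative (He H 0 0 0 / Hy H 0 0 0) *
           ((py fm 0 0 * gp (0, 0) - py gm 0 0 * fp (0, 0)) /
            (px fm 0 0 * gp (0, 0) - px gm 0 0 * fp (0, 0)))) (at 0) \<and>
        (b has_real_derivative (He H 0 0 0 / Hy H 0 0 0) * (-1)) (at 0) \<and>
        (l has_real_derivative (He H 0 0 0 / Hy H 0 0 0) *
           (- ((px fm 0 0 * py gm 0 0 - py fm 0 0 * px gm 0 0) /
               (px fm 0 0 * gp (0, 0) - px gm 0 0 * fp (0, 0))))) (at 0)"
    apply (rule exI[of _ \<delta>], rule conjI[OF dpos])
    apply (rule exI[of _ \<epsilon>3], rule conjI[OF ps(2)])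
    apply (rule exI[of _ la], rule exI[of _ lb], rule exI[of _ ll])
    using C1a C1b C1l la0 lb0 ll0 uniq3 da db dl by blast
  show ?thesis
    apply (rule exI[of _ r], rule conjI[OF rpos])
    apply (rule exI[of _ \<epsilon>0], rule conjI[OF e0pos])
    apply (rule exI[of _ A], rule exI[of _ B])
    using C1A C1B A0 B0 P1 dA dB P2 P3 by blast
qed


end
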